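(* Let $p(X_1,\dots,X_n)$ be a regular $\{\circ,\wedge\}$-term, let $V=\{y_1,\dots,y_m\}$ be the set of vertices of $\mathbf{G}(p)$, and for each $i\in\{1,\dots,n\}$ let $T_i(p)$ be the set of pairs $(y_a,y_b)$ such that $(y_a,y_b)$ is an edge of $\mathbf{G}(p)$ labelled $X_i$. Then for every $i$, every class of the equivalence relation on $V$ generated by $T_i(p)$ has at most $2$ elements.
   Context: Graph of a $\{\wedge,\circ\}$-term $p$: start with vertices $y_1,y_2$ and one edge $(y_1,y_2)$ labelled $p$; repeatedly pick an edge $(y_j,y_k)$ whose label $w$ is not a variable; if $w=u\wedge v$ replace it by two edges $(y_j,y_k)$ labelled $u$ and $v$; if $w=u\circ v$ add a new vertex $y_t$ and replace the edge by $(y_j,y_t)$ labelled $u$ and $(y_t,y_k)$ labelled $v$. Stop when all labels are variables; the result is $\mathbf{G}(p)$. For a $\{\circ,\wedge\}$-term $p$, the sets $L_p,R_p$ of left/right variables are defined by: $L_{X}=R_X=\{X\}$ for a variable; $L_{q\circ r}=L_q$, $R_{q\circ r}=R_r$; $L_{q\wedge r}=L_q\cup L_r$, $R_{q\wedge r}=R_q\cup R_r$. Regular terms form the smallest class of $\{\circ,\wedge\}$-terms containing all variables, containing $q\circ r$ whenever $q,r$ are regular and $R_q\cap L_r=\emptyset$, and containing $q\wedge r$ whenever $q,r$ are regular, $L_q\cap L_r=\emptyset$ and $R_q\cap R_r=\emptyset$. *)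

theory Defs
  imports Main
begin

datatype 'v trm = Var 'v | Comp "'v trm" "'v trm" | Meet "'v trm" "'v trm"

fun Lv :: "'v trm \<Rightarrow> 'v set" where
  "Lv (Var x) = {x}"
| "Lv (Comp q r) = Lv q"
| "Lv (Meet q r) = Lv q \<union> Lv r"

fun Rv :: "'v trm \<Rightarrow> 'v set" where
  "Rv (Var x) = {x}"
| "Rv (Comp q r) = Rv r"
| "Rv (Meet q r) = Rv q \<union> Rv r"

inductive regular :: "'v trm \<Rightarrow> bool" where
  reg_var: "regular (Var x)"
| reg_comp: "regular q \<Longrightarrow> regular r \<Longrightarrow> Rv q \<inter> Lv r = {} \<Longrightarrow> regular (Comp q r)"
| reg_meet: "regular q \<Longrightarrow> regular r \<Longrightarrow> Lv q \<inter> Lv r = {} \<Longrightarrow> Rv q \<inter> Rv r = {}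
     \<Longrightarrow> regular (Meet q r)"

text \<open>Vertices of the graph G(p): the two initial vertices y1 (Src), y2 (Tgt), and one fresh
  vertex for each occurrence of \<circ> in p, named by the position of that occurrence.\<close>
datatype vert = Src | Tgt | Mid "bool list"

fun gedges :: "'v trm \<Rightarrow> vert \<Rightarrow> vert \<Rightarrow> bool list \<Rightarrow> (vert \<times> 'v \<times> vert) set" where
  "gedges (Var x) a b pos = {(a, x, b)}"
| "gedges (Meet q r) a b pos = gedges q a b (pos @ [False]) \<union> gedges r a b (pos @ [True])"
| "gedges (Comp q r) a b pos =
     gedges q a (Mid pos) (pos @ [False]) \<union> gedges r (Mid pos) b (pos @ [True])"

fun gverts :: "'v trm \<Rightarrow> bool list \<Rightarrow> vert set" where
  "gverts (Var x) pos = {}"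
| "gverts (Meet q r) pos = gverts q (pos @ [False]) \<union> gverts r (pos @ [True])"
| "gverts (Comp q r) pos = insert (Mid pos) (gverts q (pos @ [False]) \<union> gverts r (pos @ [True]))"

definition G_edges :: "'v trm \<Rightarrow> (vert \<times> 'v \<times> vert) set" where
  "G_edges p = gedges p Src Tgt []"

definition G_verts :: "'v trm \<Rightarrow> vert set" where
  "G_verts p = {Src, Tgt} \<union> gverts p []"

definition T_rel :: "'v trm \<Rightarrow> 'v \<Rightarrow> vert rel" where
  "T_rel p X = {(a, b). (a, X, b) \<in> G_edges p}"

definition equiv_gen :: "'a set \<Rightarrow> 'a rel \<Rightarrow> 'a rel" where
  "equiv_gen V T = (Id_on V \<union> T \<union> T\<inverse>)\<^sup>+"

end

theory Submission imports Defs begin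
definition fresh :: "vert \<Rightarrow> bool list \<Rightarrow> bool" where
  "fresh v pos = (\<forall>s. v \<noteq> Mid (pos @ s))"

lemma loc: "(x,l,y) \<in> gedges q a b pos \<Longrightarrow>
   (x = a \<or> (\<exists>s. x = Mid (pos@s))) \<and> (y = b \<or> (\<exists>s. y = Mid (pos@s)))"
proof (induction q arbitrary: a b pos)
  case (Comp q r)
  then show ?case apply simp
    by (metis append_Cons append_Nil append_assoc append_Nil2)
next
  case (Meet q r)
  then show ?case apply simp
    by (metis append_Cons append_Nil append_assoc)
qed simp
lemma fresh_ext: "fresh a pos \<Longrightarrow> fresh a (pos@[z])"
  unfolding fresh_def by (metis append_Cons append_Nil append_assoc)

lemma fresh_mid: "fresh a pos \<Longrightarrow> a \<noteq> Mid (pos@s)"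
  unfolding fresh_def by blast

lemma srcL: "(a,l,y) \<in> gedges q a b pos \<Longrightarrow> fresh a pos \<Longrightarrow> l \<in> Lv q"
proof (induction q arbitrary: a b pos y)
  case (Comp q r)
  show ?case
  proof (cases "(a,l,Mid pos) \<in> gedges q a (Mid pos) (pos@[False])")
    case True then show ?thesis using Comp.IH(1) fresh_ext[OF Comp.prems(2)] by simp
  next
    case False
    then have "(a,l,y) \<in> gedges r (Mid pos) b (pos@[True]) \<or> (a,l,y) \<in> gedges q a (Mid pos) (pos@[False])"
      using Comp.prems(1) by auto
    then show ?thesis
    proof
      assume "(a,l,y) \<in> gedges r (Mid pos) b (pos@[True])"
      from loc[OF this] have "a = Mid pos \<or> (\<exists>s. a = Mid (pos@True#s))" by auto
      then show ?thesis using fresh_mid[OF Comp.prems(2), of "[]"] fresh_mid[OF Comp.prems(2)] by auto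
    next
      assume "(a,l,y) \<in> gedges q a (Mid pos) (pos@[False])"
      then show ?thesis using Comp.IH(1) fresh_ext[OF Comp.prems(2)] by simp
    qed
  qed
next
  case (Meet q r) then show ?case using fresh_ext[OF Meet.prems(2)] by (auto dest: Meet.IH)
qed auto

lemma tgtR: "(x,l,b) \<in> gedges q a b pos \<Longrightarrow> fresh b pos \<Longrightarrow> l \<in> Rv q"
proof (induction q arbitrary: a b pos x)
  case (Comp q r)
  from Comp.prems(1) have "(x,l,b) \<in> gedges r (Mid pos) b (pos@[True]) \<or> (x,l,b) \<in> gedges q a (Mid pos) (pos@[False])"
    by auto
  then show ?case
  proof
    assume "(x,l,b) \<in> gedges q a (Mid pos) (pos@[False])"
    from loc[OF this] have "b = Mid pos \<or> (\<exists>s. b = Mid (pos@False#s))" by auto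
    then show ?thesis using fresh_mid[OF Comp.prems(2), of "[]"] fresh_mid[OF Comp.prems(2)] by auto
  next
    assume "(x,l,b) \<in> gedges r (Mid pos) b (pos@[True])"
    then show ?thesis using Comp.IH(2) fresh_ext[OF Comp.prems(2)] by simp
  qed
next
  case (Meet q r) then show ?case using fresh_ext[OF Meet.prems(2)] by (auto dest: Meet.IH)
qed auto
lemma main: "regular q \<Longrightarrow> a \<noteq> b \<Longrightarrow> fresh a pos \<Longrightarrow> fresh b pos \<Longrightarrow>
  (a1,X,b1) \<in> gedges q a b pos \<Longrightarrow> (c,X,d) \<in> gedges q a b pos \<Longrightarrow>
  (a1 = c \<longrightarrow> b1 = d) \<and> (b1 = d \<longrightarrow> a1 = c) \<and> a1 \<noteq> d"
proof (induction q arbitrary: a b pos a1 b1 c d rule: regular.induct)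
  case (reg_var x)
  then show ?case by auto
next
  case (reg_comp q r)
  let ?m = "Mid pos"
  have f1: "fresh a (pos@[False])" "fresh b (pos@[True])"
    using reg_comp.prems by (auto simp: fresh_def)
  have f2: "fresh ?m (pos@[False])" "fresh ?m (pos@[True])" by (auto simp: fresh_def)
  have am: "a \<noteq> ?m" "b \<noteq> ?m" using fresh_mid[OF reg_comp.prems(2), of "[]"] fresh_mid[OF reg_comp.prems(3), of "[]"] by auto
  have af: "a \<noteq> Mid (pos@s)" "b \<noteq> Mid (pos@s)" for s using fresh_mid[OF reg_comp.prems(2)] fresh_mid[OF reg_comp.prems(3)] by auto
  have IHq: "\<And>a1 b1 c d. (a1,X,b1) \<in> gedges q a ?m (pos@[False]) \<Longrightarrow> (c,X,d) \<in> gedges q a ?m (pos@[False]) \<Longrightarrow>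
    (a1 = c \<longrightarrow> b1 = d) \<and> (b1 = d \<longrightarrow> a1 = c) \<and> a1 \<noteq> d"
    using reg_comp.IH(1)[OF am(1) f1(1) f2(1)] by blast
  have IHr: "\<And>a1 b1 c d. (a1,X,b1) \<in> gedges r ?m b (pos@[True]) \<Longrightarrow> (c,X,d) \<in> gedges r ?m b (pos@[True]) \<Longrightarrow>
    (a1 = c \<longrightarrow> b1 = d) \<and> (b1 = d \<longrightarrow> a1 = c) \<and> a1 \<noteq> d"
    using reg_comp.IH(2)[OF not_sym[OF am(2)] f2(2) f1(2)] by blast
  have mix: "(a1 = c \<longrightarrow> b1 = d) \<and> (b1 = d \<longrightarrow> a1 = c) \<and> a1 \<noteq> d \<and> c \<noteq> b1"
    if e1: "(a1,X,b1) \<in> gedges q a ?m (pos@[False])" and e2: "(c,X,d) \<in> gedges r ?m b (pos@[True])" for a1 b1 c d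
  proof -
    have l1: "(a1 = a \<or> (\<exists>s. a1 = Mid (pos@False#s))) \<and> (b1 = ?m \<or> (\<exists>s. b1 = Mid (pos@False#s)))"
      using loc[OF e1] by auto
    have l2: "(c = ?m \<or> (\<exists>s. c = Mid (pos@True#s))) \<and> (d = b \<or> (\<exists>s. d = Mid (pos@True#s)))"
      using loc[OF e2] by auto
    have "c \<noteq> b1"
    proof
      assume "c = b1"
      with l1 l2 have "c = ?m" "b1 = ?m" by auto
      then have "X \<in> Rv q" "X \<in> Lv r" using tgtR[of a1 X ?m q a "pos@[False]"] srcL[of ?m X d r b "pos@[True]"] e1 e2 f2 by auto
      then show False using reg_comp.hyps(3) by auto
    qed
    moreover have "a1 \<noteq> c" using l1 l2 am af by auto
    moreover have "b1 \<noteq> d" using l1 l2 am af by auto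
    moreover have "a1 \<noteq> d" using l1 l2 am af reg_comp.prems(1) by auto
    ultimately show ?thesis by auto
  qed
  have E: "gedges (Comp q r) a b pos = gedges q a ?m (pos@[False]) \<union> gedges r ?m b (pos@[True])" by simp
  show ?case
  proof -
    from reg_comp.prems(4,5) E
    consider "(a1,X,b1) \<in> gedges q a ?m (pos@[False])" "(c,X,d) \<in> gedges q a ?m (pos@[False])"
      | "(a1,X,b1) \<in> gedges q a ?m (pos@[False])" "(c,X,d) \<in> gedges r ?m b (pos@[True])"
      | "(a1,X,b1) \<in> gedges r ?m b (pos@[True])" "(c,X,d) \<in> gedges q a ?m (pos@[False])"
      | "(a1,X,b1) \<in> gedges r ?m b (pos@[True])" "(c,X,d) \<in> gedges r ?m b (pos@[True])"
      by blast
    then show ?thesis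
    proof cases
      case 1 then show ?thesis by (rule IHq)
    next
      case 2 then show ?thesis using mix by blast
    next
      case 3 then show ?thesis using mix[of c d a1 b1] by blast
    next
      case 4 then show ?thesis by (rule IHr)
    qed
  qed
next
  case (reg_meet q r)
  have f1: "fresh a (pos@[False])" "fresh b (pos@[False])" "fresh a (pos@[True])" "fresh b (pos@[True])"
    using reg_meet.prems by (auto simp: fresh_def)
  have af: "a \<noteq> Mid (pos@s)" "b \<noteq> Mid (pos@s)" for s using fresh_mid[OF reg_meet.prems(2)] fresh_mid[OF reg_meet.prems(3)] by auto
  have IHq: "\<And>a1 b1 c d. (a1,X,b1) \<in> gedges q a b (pos@[False]) \<Longrightarrow> (c,X,d) \<in> gedges q a b (pos@[False]) \<Longrightarrow>
    (a1 = c \<longrightarrow> b1 = d) \<and> (b1 = d \<longrightarrow> a1 = c) \<and> a1 \<noteq> d"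
    using reg_meet.IH(1)[OF reg_meet.prems(1) f1(1) f1(2)] by blast
  have IHr: "\<And>a1 b1 c d. (a1,X,b1) \<in> gedges r a b (pos@[True]) \<Longrightarrow> (c,X,d) \<in> gedges r a b (pos@[True]) \<Longrightarrow>
    (a1 = c \<longrightarrow> b1 = d) \<and> (b1 = d \<longrightarrow> a1 = c) \<and> a1 \<noteq> d"
    using reg_meet.IH(2)[OF reg_meet.prems(1) f1(3) f1(4)] by blast
  have mix: "a1 \<noteq> c \<and> b1 \<noteq> d \<and> a1 \<noteq> d \<and> c \<noteq> b1"
    if e1: "(a1,X,b1) \<in> gedges q a b (pos@[False])" and e2: "(c,X,d) \<in> gedges r a b (pos@[True])" for a1 b1 c d
  proof -
    have l1: "(a1 = a \<or> (\<exists>s. a1 = Mid (pos@False#s))) \<and> (b1 = b \<or> (\<exists>s. b1 = Mid (pos@False#s)))"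
      using loc[OF e1] by auto
    have l2: "(c = a \<or> (\<exists>s. c = Mid (pos@True#s))) \<and> (d = b \<or> (\<exists>s. d = Mid (pos@True#s)))"
      using loc[OF e2] by auto
    have "a1 \<noteq> c"
    proof
      assume "a1 = c"
      with l1 l2 have "c = a" "a1 = a" by auto
      then have "X \<in> Lv q" "X \<in> Lv r" using srcL[of a X b1 q b "pos@[False]"] srcL[of a X d r b "pos@[True]"] e1 e2 f1 by auto
      then show False using reg_meet.hyps(3) by auto
    qed
    moreover have "b1 \<noteq> d"
    proof
      assume "b1 = d"
      with l1 l2 have "d = b" "b1 = b" by auto
      then have "X \<in> Rv q" "X \<in> Rv r" using tgtR[of a1 X b q a "pos@[False]"] tgtR[of c X b r a "pos@[True]"] e1 e2 f1 by auto
      then show False using reg_meet.hyps(4) by auto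
    qed
    moreover have "a1 \<noteq> d" using l1 l2 af reg_meet.prems(1) by auto
    moreover have "c \<noteq> b1" using l1 l2 af reg_meet.prems(1) by auto
    ultimately show ?thesis by auto
  qed
  have E: "gedges (Meet q r) a b pos = gedges q a b (pos@[False]) \<union> gedges r a b (pos@[True])" by simp
  show ?case
  proof -
    from reg_meet.prems(4,5) E
    consider "(a1,X,b1) \<in> gedges q a b (pos@[False])" "(c,X,d) \<in> gedges q a b (pos@[False])"
      | "(a1,X,b1) \<in> gedges q a b (pos@[False])" "(c,X,d) \<in> gedges r a b (pos@[True])"
      | "(a1,X,b1) \<in> gedges r a b (pos@[True])" "(c,X,d) \<in> gedges q a b (pos@[False])"
      | "(a1,X,b1) \<in> gedges r a b (pos@[True])" "(c,X,d) \<in> gedges r a b (pos@[True])"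
      by blast
    then show ?thesis
    proof cases
      case 1 then show ?thesis by (rule IHq)
    next
      case 2 then show ?thesis using mix by blast
    next
      case 3 then show ?thesis using mix[of c d a1 b1] by blast
    next
      case 4 then show ?thesis by (rule IHr)
    qed
  qed
qed


lemma edge_prop:
  assumes "regular p" "(a1,b1) \<in> T_rel p X" "(c,d) \<in> T_rel p X"
  shows "(a1 = c \<longrightarrow> b1 = d) \<and> (b1 = d \<longrightarrow> a1 = c) \<and> a1 \<noteq> d"
  using main[OF assms(1), of Src Tgt "[]" a1 X b1 c d] assms(2,3)
  by (simp add: T_rel_def G_edges_def fresh_def)

lemma nb_unique:
  assumes "regular p"
    and "(w,u) \<in> T_rel p X \<or> (u,w) \<in> T_rel p X"
    and "(w,u') \<in> T_rel p X \<or> (u',w) \<in> T_rel p X"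
  shows "u = u'"
  using assms(2,3) edge_prop[OF assms(1)] by metis

lemma cls:
  assumes "regular p"
    and "(v,w) \<in> (Id_on V \<union> T_rel p X \<union> (T_rel p X)\<inverse>)\<^sup>+"
  shows "w = v \<or> (v,w) \<in> T_rel p X \<or> (w,v) \<in> T_rel p X"
  using assms(2)
proof (induction rule: trancl_induct)
  case (base y) then show ?case by auto
next
  case (step y z)
  from step.hyps(2) have yz: "z = y \<or> (y,z) \<in> T_rel p X \<or> (z,y) \<in> T_rel p X" by auto
  from step.IH show ?case
  proof
    assume "y = v" then show ?thesis using yz by auto
  next
    assume vy: "(v,y) \<in> T_rel p X \<or> (y,v) \<in> T_rel p X"
    show ?thesis
    proof (cases "z = y")
      case True then show ?thesis using vy by auto
    next
      case False
      with yz have "(y,z) \<in> T_rel p X \<or> (z,y) \<in> T_rel p X" by auto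
      then have "z = v" using nb_unique[OF assms(1), of y z X v] vy by auto
      then show ?thesis by auto
    qed
  qed
qed

theorem lemma4p3:
  fixes p :: "'v trm" and X :: 'v
  assumes "regular p"
  shows "\<forall>C \<in> G_verts p // equiv_gen (G_verts p) (T_rel p X). card C \<le> 2"
proof
  fix C assume "C \<in> G_verts p // equiv_gen (G_verts p) (T_rel p X)"
  then obtain v where C: "C = equiv_gen (G_verts p) (T_rel p X) `` {v}"
    by (auto elim: quotientE)
  let ?N = "{w. (v,w) \<in> T_rel p X \<or> (w,v) \<in> T_rel p X}"
  have sub: "C \<subseteq> insert v ?N"
    using cls[OF assms] unfolding C equiv_gen_def by blast
  show "card C \<le> 2"
  proof (cases "?N = {}")
    case True
    then have "C \<subseteq> {v}" using sub by auto
    then have "card C \<le> card {v}" by (intro card_mono) auto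
    then show ?thesis by simp
  next
    case False
    then obtain w where w: "w \<in> ?N" by blast
    have "?N \<subseteq> {w}" using w nb_unique[OF assms, of v w X] by blast
    then have "C \<subseteq> {v, w}" using sub by auto
    then have "card C \<le> card {v, w}" by (intro card_mono) auto
    also have "\<dots> \<le> 2" by (simp add: card_insert_le_m1)
    finally show ?thesis .
  qed
qed

end
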